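(* For any two polytopes $P,Q\subseteq\mathbb{R}^n$ we have $\mathrm{Sh}(P+Q)=\mathrm{Sh}(P)+\mathrm{Sh}(Q)$. Consequently $P\mapsto\mathrm{Sh}(P)$ induces a group homomorphism $\mathrm{Sh}:\mathcal{P}(\mathbb{R}^n)\to\mathcal{P}(\mathbb{R}^n)$.
   Context: Polytopes are convex hulls of nonempty finite sets; $P+Q$ is the Minkowski sum and $\mathcal{P}(\mathbb{R}^n)$ the Grothendieck group of polytopes. For $S\subseteq\mathbb{R}^n$, $\mathrm{hull}(S)$ is its convex hull and $h(S)=\min\{x_n: x\in S\}$ its height. For $t\in\mathbb{R}$, $c_t:\mathbb{R}^n\to\mathbb{R}^n$, $(x_1,\dots,x_n)\mapsto(x_1,\dots,x_{n-1},t)$. The shadow of a polytope $P$ is $\mathrm{Sh}(P)=\mathrm{hull}(P\cup c_{h(P)}(P))$. *)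

theory Defs
  imports "HOL-Analysis.Analysis"
begin

text \<open>Points of R^n are vectors real^'n; the index type 'n is finite and linearly
ordered, its greatest element playing the role of the last coordinate n.\<close>

definition last_idx :: "'n::{finite,linorder}" where
  "last_idx = Max (UNIV :: 'n set)"

definition polytope :: "(real ^ 'n) set \<Rightarrow> bool" where
  "polytope P \<longleftrightarrow> (\<exists>S. finite S \<and> S \<noteq> {} \<and> P = convex hull S)"

definition height :: "(real ^ 'n::{finite,linorder}) set \<Rightarrow> real" where
  "height S = Inf ((\<lambda>x. x $ last_idx) ` S)"

definition cproj :: "real \<Rightarrow> (real ^ 'n::{finite,linorder}) \<Rightarrow> real ^ 'n::{finite,linorder}" where
  "cproj t x = (\<chi> i. if i = last_idx then t else x $ i)"

definition shadow :: "(real ^ 'n::{finite,linorder}) set \<Rightarrow> (real ^ 'n::{finite,linorder}) set" where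
  "shadow P = convex hull (P \<union> cproj (height P) ` P)"

end

theory Submission
  imports Defs
begin

lemma cproj_add: "cproj (s + t) (x + y) = cproj s x + cproj t (y::real^'n::{finite,linorder})"
  by (simp add: cproj_def vec_eq_iff)

lemma mixed_seg:
  fixes x y :: "real^'n::{finite,linorder}"
  assumes "s \<le> x $ last_idx" "t \<le> y $ last_idx"
  shows "x + cproj t y \<in> closed_segment (x + y) (cproj (s + t) (x + y))"
proof -
  define d where "d = x $ last_idx + y $ last_idx - s - t"
  define u where "u = (if d = 0 then 0 else (y $ last_idx - t) / d)"
  have d0: "d \<ge> 0" using assms by (simp add: d_def)
  have u01: "0 \<le> u \<and> u \<le> 1"
    using assms d0 by (auto simp: u_def d_def divide_simps)
  have "x + cproj t y = (1 - u) *\<^sub>R (x + y) + u *\<^sub>R cproj (s + t) (x + y)"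
  proof (cases "d = 0")
    case True
    hence "y $ last_idx = t" using assms by (simp add: d_def)
    thus ?thesis using True by (simp add: u_def cproj_def vec_eq_iff)
  next
    case False
    show ?thesis unfolding vec_eq_iff
    proof
      fix i
      show "(x + cproj t y) $ i = ((1 - u) *\<^sub>R (x + y) + u *\<^sub>R cproj (s + t) (x + y)) $ i"
      proof (cases "i = last_idx")
        case True
        have "(1 - u) * (x $ last_idx + y $ last_idx) + u * (s + t)
              = x $ last_idx + y $ last_idx - u * d" by (simp add: d_def algebra_simps)
        also have "u * d = y $ last_idx - t" using False by (simp add: u_def)
        finally show ?thesis using True by (simp add: cproj_def algebra_simps)
      next
        case False
        thus ?thesis by (simp add: cproj_def algebra_simps)
      qed
    qed
  qed
  thus ?thesis using u01 unfolding closed_segment_def by blast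
qed

lemma polytope_min:
  fixes P :: "(real ^ 'n::{finite,linorder}) set"
  assumes "polytope P"
  shows "\<exists>x\<in>P. height P = x $ last_idx \<and> (\<forall>y\<in>P. x $ last_idx \<le> y $ last_idx)"
proof -
  obtain S where S: "finite S" "S \<noteq> {}" "P = convex hull S"
    using assms polytope_def by blast
  have "compact P" using S by (simp add: compact_convex_hull finite_imp_compact)
  moreover have "P \<noteq> {}" using S by simp
  moreover have "continuous_on P (\<lambda>x::real^'n::{finite,linorder}. x $ last_idx)"
    by (intro continuous_intros)
  ultimately obtain x where x: "x \<in> P" "\<forall>y\<in>P. x $ last_idx \<le> y $ last_idx"
    using continuous_attains_inf by blast
  have "height P = x $ last_idx" unfolding height_def
    by (rule cInf_eq_minimum) (use x in auto)
  thus ?thesis using x by blast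
qed

lemma height_le: "polytope P \<Longrightarrow> y \<in> P \<Longrightarrow> height P \<le> y $ last_idx"
  using polytope_min by metis

lemma height_plus:
  fixes P Q :: "(real ^ 'n::{finite,linorder}) set"
  assumes "polytope P" "polytope Q"
  shows "height (P + Q) = height P + height Q"
proof -
  obtain x where x: "x\<in>P" "height P = x $ last_idx" "\<forall>y\<in>P. x $ last_idx \<le> y $ last_idx"
    using polytope_min[OF assms(1)] by blast
  obtain z where z: "z\<in>Q" "height Q = z $ last_idx" "\<forall>y\<in>Q. z $ last_idx \<le> y $ last_idx"
    using polytope_min[OF assms(2)] by blast
  have "Inf ((\<lambda>x. x $ last_idx) ` (P + Q)) = height P + height Q"
  proof (rule cInf_eq_minimum)
    show "height P + height Q \<in> (\<lambda>x. x $ last_idx) ` (P + Q)"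
      using x z by (metis image_eqI set_plus_intro vector_add_component)
  next
    fix w assume "w \<in> (\<lambda>x. x $ last_idx) ` (P + Q)"
    then obtain a b where "a \<in> P" "b \<in> Q" "w = (a + b) $ last_idx"
      by (auto elim!: set_plus_elim)
    thus "height P + height Q \<le> w" using x z by force
  qed
  thus ?thesis by (simp add: height_def)
qed

lemma shadow_plus:
  assumes P: "polytope P" and Q: "polytope Q"
  shows "shadow (P + Q) = shadow P + shadow Q"
proof -
  define s where "s = height P"
  define t where "t = height Q"
  define A where "A = (P + Q) \<union> cproj (s + t) ` (P + Q)"
  define B where "B = (P \<union> cproj s ` P) + (Q \<union> cproj t ` Q)"
  have L: "shadow (P + Q) = convex hull A"
    unfolding shadow_def A_def s_def t_def height_plus[OF P Q] ..
  have R: "shadow P + shadow Q = convex hull B"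
    unfolding shadow_def B_def s_def t_def convex_hull_set_plus ..
  have AB: "A \<subseteq> B"
  proof
    fix w assume "w \<in> A"
    then consider "w \<in> P + Q" | "w \<in> cproj (s + t) ` (P + Q)" unfolding A_def by blast
    thus "w \<in> B"
    proof cases
      case 1 thus ?thesis unfolding B_def by (auto elim!: set_plus_elim)
    next
      case 2
      then obtain a b where "a \<in> P" "b \<in> Q" "w = cproj (s + t) (a + b)"
        by (auto elim!: set_plus_elim)
      thus ?thesis unfolding B_def cproj_add by auto
    qed
  qed
  have BA: "B \<subseteq> convex hull A"
  proof
    fix w assume "w \<in> B"
    then obtain a b where a: "a \<in> P \<union> cproj s ` P" and b: "b \<in> Q \<union> cproj t ` Q"
      and w: "w = a + b" unfolding B_def by (auto elim!: set_plus_elim)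
    have sub: "A \<subseteq> convex hull A" by (rule hull_subset)
    from a show "w \<in> convex hull A"
    proof
      assume aP: "a \<in> P"
      from b show ?thesis
      proof
        assume "b \<in> Q" thus ?thesis using aP w sub unfolding A_def by auto
      next
        assume "b \<in> cproj t ` Q"
        then obtain y where y: "y \<in> Q" "b = cproj t y" by auto
        have "w \<in> closed_segment (a + y) (cproj (s + t) (a + y))"
          using mixed_seg[of s a t y] height_le[OF P aP] height_le[OF Q y(1)] w y
          unfolding s_def t_def by simp
        moreover have "a + y \<in> convex hull A" "cproj (s + t) (a + y) \<in> convex hull A"
          using aP y(1) sub unfolding A_def by auto
        ultimately show ?thesis
          by (meson convex_contains_segment convex_convex_hull subsetD)
      qed
    next
      assume "a \<in> cproj s ` P"
      then obtain x where x: "x \<in> P" "a = cproj s x" by auto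
      from b show ?thesis
      proof
        assume bQ: "b \<in> Q"
        have ws: "w \<in> closed_segment (b + x) (cproj (t + s) (b + x))"
          using mixed_seg[of t b s x] height_le[OF P x(1)] height_le[OF Q bQ] w x
          unfolding s_def t_def by (simp add: add.commute)
        have e1: "b + x = x + b" and e2: "t + s = s + t" by (simp_all add: add.commute)
        have "x + b \<in> convex hull A" "cproj (s + t) (x + b) \<in> convex hull A"
          using bQ x(1) sub unfolding A_def by auto
        hence "closed_segment (x + b) (cproj (s + t) (x + b)) \<subseteq> convex hull A"
          by (simp add: closed_segment_subset)
        thus ?thesis using ws unfolding e1 e2 by blast
      next
        assume "b \<in> cproj t ` Q"
        then obtain y where y: "y \<in> Q" "b = cproj t y" by auto
        have "w = cproj (s + t) (x + y)" using w x y cproj_add by metis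
        thus ?thesis using x y sub unfolding A_def by auto
      qed
    qed
  qed
  have "convex hull A = convex hull B"
  proof
    show "convex hull A \<subseteq> convex hull B" using AB by (rule hull_mono)
    show "convex hull B \<subseteq> convex hull A"
      using BA by (simp add: convex_hull_subset)
  qed
  thus ?thesis using L R by simp
qed

theorem lemma3p2:
  fixes P Q :: "(real ^ 'n::{finite,linorder}) set"
  assumes "polytope P" and "polytope Q"
  shows "shadow (P + Q) = shadow P + shadow Q
    \<and> (\<forall>P1 Q1 P2 Q2 :: (real ^ 'n::{finite,linorder}) set.
          polytope P1 \<and> polytope Q1 \<and> polytope P2 \<and> polytope Q2 \<and> P1 + Q2 = P2 + Q1
          \<longrightarrow> shadow P1 + shadow Q2 = shadow P2 + shadow Q1)"
  using shadow_plus[OF assms] shadow_plus by metis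

end
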